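(* Let $\mathfrak S=(S,\xrightarrow{F},\le)$ be an $\infty$-effective complete WSTS, and let $s_0\in S$ be bounded, i.e., such that $Post^*_{\mathfrak S}(s_0)$ is finite. Then the procedure $\mathbf{Clover}_{\mathfrak S}$ terminates on input $s_0$.
   Context: Complete WSTS: $(S,\le)$ a well partial order and continuous dcpo, $F$ a finite set of partial continuous maps (Scott-open domain, preserving lubs of directed subsets of the domain), $s\to f(s)$. $Post$: one-step successors; $Post^*$: reachability set. $F^*$: finite compositions of maps of $F$. Lub-acceleration: $\operatorname{dom}g^\infty=\operatorname{dom}g$, $g^\infty(x)=\bigvee_n g^n(x)$ if $x<g(x)$, else $g(x)$. $\infty$-effective: states finitely coded, $\le$ decidable, maps computable with decidable domains, each $g^\infty$ ($g\in F^*$) computable. Procedure $\mathbf{Clover}_{\mathfrak S}(s_0)$: $A\leftarrow\{s_0\}$; while $Post(A)\not\le^\flat A$ (where $B\le^\flat C$ iff $\downarrow B\subseteq\downarrow C$): choose fairly $(g,a)\in F^*\times A$ with $a\in\operatorname{dom}g$, set $A\leftarrow A\cup\{g^\infty(a)\}$; return $\operatorname{Max}A$. Fair: on every infinite execution, every pair $(g,a)$ with $a$ in the current $A$ and $a\in\operatorname{dom}g$ is picked later. *)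

theory Defs
  imports Main
begin

definition directed :: "'a::order set \<Rightarrow> bool" where
  "directed D \<longleftrightarrow> D \<noteq> {} \<and> (\<forall>x\<in>D. \<forall>y\<in>D. \<exists>z\<in>D. x \<le> z \<and> y \<le> z)"

definition is_lub :: "'a::order set \<Rightarrow> 'a \<Rightarrow> bool" where
  "is_lub D u \<longleftrightarrow> (\<forall>x\<in>D. x \<le> u) \<and> (\<forall>v. (\<forall>x\<in>D. x \<le> v) \<longrightarrow> u \<le> v)"

definition lub :: "'a::order set \<Rightarrow> 'a" where
  "lub D = (THE u. is_lub D u)"

definition dcpo :: "'a::order itself \<Rightarrow> bool" where
  "dcpo _ \<longleftrightarrow> (\<forall>D::'a set. directed D \<longrightarrow> (\<exists>u. is_lub D u))"

definition way_below :: "'a::order \<Rightarrow> 'a \<Rightarrow> bool" where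
  "way_below x y \<longleftrightarrow>
     (\<forall>D. directed D \<longrightarrow> (\<forall>u. is_lub D u \<longrightarrow> y \<le> u \<longrightarrow> (\<exists>d\<in>D. x \<le> d)))"

definition continuous_dcpo :: "'a::order itself \<Rightarrow> bool" where
  "continuous_dcpo T \<longleftrightarrow> dcpo T \<and>
     (\<forall>x::'a. directed {y. way_below y x} \<and> is_lub {y. way_below y x} x)"

definition well_partial_order :: "'a::order itself \<Rightarrow> bool" where
  "well_partial_order _ \<longleftrightarrow> (\<forall>f::nat \<Rightarrow> 'a. \<exists>i j. i < j \<and> f i \<le> f j)"

definition scott_open :: "'a::order set \<Rightarrow> bool" where
  "scott_open U \<longleftrightarrow> (\<forall>x\<in>U. \<forall>y. x \<le> y \<longrightarrow> y \<in> U) \<and>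
     (\<forall>D u. directed D \<longrightarrow> is_lub D u \<longrightarrow> u \<in> U \<longrightarrow> D \<inter> U \<noteq> {})"

definition pdom :: "('a \<Rightarrow> 'b option) \<Rightarrow> 'a set" where
  "pdom f = {x. f x \<noteq> None}"

definition partial_continuous :: "('a::order \<Rightarrow> 'a option) \<Rightarrow> bool" where
  "partial_continuous f \<longleftrightarrow> scott_open (pdom f) \<and>
     (\<forall>D u. D \<subseteq> pdom f \<longrightarrow> directed D \<longrightarrow> is_lub D u \<longrightarrow>
        is_lub ((\<lambda>x. the (f x)) ` D) (the (f u)))"

definition complete_wsts :: "('a::order \<Rightarrow> 'a option) set \<Rightarrow> bool" where
  "complete_wsts F \<longleftrightarrow> well_partial_order TYPE('a) \<and> continuous_dcpo TYPE('a) \<and>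
     finite F \<and> (\<forall>f\<in>F. partial_continuous f)"

definition Post :: "('a \<Rightarrow> 'a option) set \<Rightarrow> 'a set \<Rightarrow> 'a set" where
  "Post F A = {t. \<exists>f\<in>F. \<exists>a\<in>A. f a = Some t}"

inductive_set PostStar :: "('a \<Rightarrow> 'a option) set \<Rightarrow> 'a \<Rightarrow> 'a set"
  for F :: "('a \<Rightarrow> 'a option) set" and s0 :: 'a where
  refl: "s0 \<in> PostStar F s0"
| step: "s \<in> PostStar F s0 \<Longrightarrow> f \<in> F \<Longrightarrow> f s = Some t \<Longrightarrow> t \<in> PostStar F s0"

definition pcomp :: "('a \<Rightarrow> 'a option) \<Rightarrow> ('a \<Rightarrow> 'a option) \<Rightarrow> ('a \<Rightarrow> 'a option)" where
  "pcomp g h = (\<lambda>x. case h x of None \<Rightarrow> None | Some y \<Rightarrow> g y)"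

inductive_set Fstar :: "('a \<Rightarrow> 'a option) set \<Rightarrow> ('a \<Rightarrow> 'a option) set"
  for F :: "('a \<Rightarrow> 'a option) set" where
  base: "f \<in> F \<Longrightarrow> f \<in> Fstar F"
| comp: "g \<in> Fstar F \<Longrightarrow> f \<in> F \<Longrightarrow> pcomp f g \<in> Fstar F"

fun piter :: "nat \<Rightarrow> ('a \<Rightarrow> 'a option) \<Rightarrow> 'a \<Rightarrow> 'a option" where
  "piter 0 g x = Some x"
| "piter (Suc n) g x = (case piter n g x of None \<Rightarrow> None | Some y \<Rightarrow> g y)"

definition accel :: "('a::order \<Rightarrow> 'a option) \<Rightarrow> 'a \<Rightarrow> 'a option" where
  "accel g x = (case g x of None \<Rightarrow> None
     | Some y \<Rightarrow> if x < y then Some (lub {z. \<exists>n. piter n g x = Some z}) else Some y)"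

definition below_flat :: "'a::order set \<Rightarrow> 'a set \<Rightarrow> bool" where
  "below_flat B C \<longleftrightarrow> {x. \<exists>b\<in>B. x \<le> b} \<subseteq> {x. \<exists>c\<in>C. x \<le> c}"

text \<open>An infinite execution of Clover on s0: a sequence of sets A n together with
the chosen pairs (g, a) at each loop iteration; the loop guard holds at every
iteration (otherwise the procedure would have returned).\<close>
definition clover_infinite_run ::
  "('a::order \<Rightarrow> 'a option) set \<Rightarrow> 'a \<Rightarrow> (nat \<Rightarrow> 'a set) \<Rightarrow>
   (nat \<Rightarrow> ('a \<Rightarrow> 'a option) \<times> 'a) \<Rightarrow> bool" where
  "clover_infinite_run F s0 A c \<longleftrightarrow>
     A 0 = {s0} \<and>
     (\<forall>n. \<not> below_flat (Post F (A n)) (A n) \<and>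
          fst (c n) \<in> Fstar F \<and> snd (c n) \<in> A n \<and> snd (c n) \<in> pdom (fst (c n)) \<and>
          A (Suc n) = A n \<union> {the (accel (fst (c n)) (snd (c n)))})"

definition clover_fair ::
  "('a \<Rightarrow> 'a option) set \<Rightarrow> (nat \<Rightarrow> 'a set) \<Rightarrow> (nat \<Rightarrow> ('a \<Rightarrow> 'a option) \<times> 'a) \<Rightarrow> bool" where
  "clover_fair F A c \<longleftrightarrow>
     (\<forall>n. \<forall>g\<in>Fstar F. \<forall>a\<in>A n. a \<in> pdom g \<longrightarrow> (\<exists>m\<ge>n. c m = (g, a)))"

definition clover_terminates :: "('a::order \<Rightarrow> 'a option) set \<Rightarrow> 'a \<Rightarrow> bool" where
  "clover_terminates F s0 \<longleftrightarrow> (\<nexists>A c. clover_infinite_run F s0 A c \<and> clover_fair F A c)"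

end

theory Submission
  imports Defs
begin

definition pmono :: "('a::order \<Rightarrow> 'a option) \<Rightarrow> bool" where
  "pmono g \<longleftrightarrow> (\<forall>x y gx. x \<le> y \<longrightarrow> g x = Some gx \<longrightarrow> (\<exists>gy. g y = Some gy \<and> gx \<le> gy))"

lemma pc_pmono:
  assumes "partial_continuous g" shows "pmono g"
  unfolding pmono_def
proof (intro allI impI)
  fix x y gx assume xy: "x \<le> y" and gx: "g x = Some gx"
  have so: "scott_open (pdom g)" and lu: "\<And>D u. D \<subseteq> pdom g \<Longrightarrow> directed D \<Longrightarrow> is_lub D u \<Longrightarrow>
        is_lub ((\<lambda>x. the (g x)) ` D) (the (g u))"
    using assms unfolding partial_continuous_def by auto
  have "x \<in> pdom g" using gx by (simp add: pdom_def)
  hence yd: "y \<in> pdom g" using so xy unfolding scott_open_def by blast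
  then obtain gy where gy: "g y = Some gy" by (auto simp: pdom_def)
  have "directed {x, y}" unfolding directed_def using xy by auto
  moreover have "is_lub {x, y} y" unfolding is_lub_def using xy by auto
  moreover have "{x,y} \<subseteq> pdom g" using yd \<open>x \<in> pdom g\<close> by auto
  ultimately have "is_lub ((\<lambda>x. the (g x)) ` {x,y}) (the (g y))" using lu by blast
  hence "gx \<le> gy" using gx gy unfolding is_lub_def by auto
  thus "\<exists>gy. g y = Some gy \<and> gx \<le> gy" using gy by blast
qed

lemma pmono_pcomp: "pmono f \<Longrightarrow> pmono g \<Longrightarrow> pmono (pcomp f g)"
  unfolding pmono_def pcomp_def
  by (fastforce split: option.splits)

lemma Fstar_pmono:
  assumes "complete_wsts F" "g \<in> Fstar F" shows "pmono g"
  using assms(2)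
proof induction
  case (base f) thus ?case using assms(1) pc_pmono unfolding complete_wsts_def by blast
next
  case (comp g f) thus ?case using assms(1) pc_pmono pmono_pcomp unfolding complete_wsts_def by blast
qed

lemma Fstar_closed:
  assumes "g \<in> Fstar F" shows "\<And>a b. a \<in> PostStar F s0 \<Longrightarrow> g a = Some b \<Longrightarrow> b \<in> PostStar F s0"
  using assms
proof induction
  case (base f) thus ?case by (blast intro: PostStar.step)
next
  case (comp g f a b)
  then obtain c where "g a = Some c" "f c = Some b" by (auto simp: pcomp_def split: option.splits)
  thus ?case using comp by (blast intro: PostStar.step)
qed

lemma accel_ok:
  assumes cw: "complete_wsts F" and fin: "finite (PostStar F s0)"
    and gF: "g \<in> Fstar F" and aP: "a \<in> PostStar F s0" and ga: "g a = Some y"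
  shows "\<exists>z. accel g a = Some z \<and> z \<in> PostStar F s0 \<and> y \<le> z"
proof (cases "a < y")
  case False thus ?thesis using ga Fstar_closed[OF gF aP ga] by (simp add: accel_def)
next
  case True
  have pm: "pmono g" using Fstar_pmono cw gF by blast
  have step: "\<exists>z z'. piter n g a = Some z \<and> piter (Suc n) g a = Some z' \<and> z \<le> z' \<and> z \<in> PostStar F s0" for n
  proof (induction n)
    case 0 thus ?case using ga True aP by auto
  next
    case (Suc n)
    then obtain z z' where h: "piter n g a = Some z" "piter (Suc n) g a = Some z'" "z \<le> z'" "z \<in> PostStar F s0" by blast
    have gz: "g z = Some z'" using h by simp
    obtain z'' where "g z' = Some z''" "z' \<le> z''" using pm h(3) gz unfolding pmono_def by blast
    moreover have "z' \<in> PostStar F s0" using Fstar_closed[OF gF h(4) gz] .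
    ultimately show ?case using h by auto
  qed
  define s where "s n = the (piter n g a)" for n
  have ps: "piter n g a = Some (s n)" for n using step[of n] by (auto simp: s_def)
  have sle: "s n \<le> s (Suc n)" for n using step[of n] ps[of n] ps[of "Suc n"] by auto
  have sP: "s n \<in> PostStar F s0" for n using step[of n] ps[of n] by auto
  have smono: "n \<le> m \<Longrightarrow> s n \<le> s m" for n m using lift_Suc_mono_le[of s, OF sle] by blast
  have "\<not> inj s"
  proof
    assume "inj s"
    moreover have "finite (range s)" using fin sP by (meson finite_subset image_subsetI)
    ultimately have "finite (UNIV::nat set)" using finite_imageD by blast
    thus False by simp
  qed
  then obtain i0 j0 where ij0: "s i0 = s j0" "i0 \<noteq> j0" unfolding inj_def by blast
  obtain i j where ij: "s i = s j" "i < j"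
  proof (cases "i0 < j0")
    case True thus ?thesis using that ij0 by blast
  next
    case False hence "j0 < i0" using ij0(2) by simp
    thus ?thesis using that ij0(1) by (metis)
  qed
  have fix1: "s (Suc i) = s i"
  proof (rule order_antisym)
    show "s (Suc i) \<le> s i" using smono[of "Suc i" j] ij by simp
    show "s i \<le> s (Suc i)" by (rule sle)
  qed
  have gfix: "g (s i) = Some (s i)" using ps[of i] ps[of "Suc i"] fix1 by simp
  have const: "k \<ge> i \<Longrightarrow> s k = s i" for k
  proof (induction k rule: dec_induct)
    case base thus ?case by simp
  next
    case (step k)
    have "piter (Suc k) g a = Some (s i)" using ps[of k] step.IH gfix by simp
    thus ?case using ps[of "Suc k"] by simp
  qed
  have all: "s k \<le> s i" for k
  proof (cases "k \<le> i")
    case True thus ?thesis using smono by blast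
  next
    case False thus ?thesis using const[of k] by simp
  qed
  have I: "{z. \<exists>n. piter n g a = Some z} = range s" using ps by auto
  have lubI: "is_lub (range s) (s i)" unfolding is_lub_def using all by auto
  have "lub (range s) = s i"
    unfolding lub_def
  proof (rule the_equality)
    show "is_lub (range s) (s i)" by fact
  next
    fix u assume "is_lub (range s) u"
    thus "u = s i" using lubI unfolding is_lub_def by (meson order_antisym)
  qed
  hence "accel g a = Some (s i)" using ga True I by (simp add: accel_def)
  moreover have "y \<le> s i" using all[of 1] ps[of 1] ga by simp
  ultimately show ?thesis using sP by blast
qed

theorem lemma5p7:
  fixes F :: "('a::order \<Rightarrow> 'a option) set" and s0 :: 'a
  assumes "complete_wsts F"
    and "finite (PostStar F s0)"
  shows "clover_terminates F s0"
  unfolding clover_terminates_def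
proof
  assume "\<exists>A c. clover_infinite_run F s0 A c \<and> clover_fair F A c"
  then obtain A c where run: "clover_infinite_run F s0 A c" and fair: "clover_fair F A c" by blast
  have A0: "A 0 = {s0}" and R: "\<And>n. \<not> below_flat (Post F (A n)) (A n) \<and>
          fst (c n) \<in> Fstar F \<and> snd (c n) \<in> A n \<and> snd (c n) \<in> pdom (fst (c n)) \<and>
          A (Suc n) = A n \<union> {the (accel (fst (c n)) (snd (c n)))}"
    using run unfolding clover_infinite_run_def by auto
  have AP: "A n \<subseteq> PostStar F s0" for n
  proof (induction n)
    case 0 thus ?case using A0 by (auto intro: PostStar.refl)
  next
    case (Suc n)
    obtain y where y: "fst (c n) (snd (c n)) = Some y" using R[of n] by (auto simp: pdom_def)
    obtain z where "accel (fst (c n)) (snd (c n)) = Some z" "z \<in> PostStar F s0"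
      using accel_ok[OF assms(1) assms(2), of "fst (c n)" "snd (c n)" y] y R[of n] Suc by blast
    thus ?case using R[of n] Suc by auto
  qed
  have Amono: "n \<le> m \<Longrightarrow> A n \<subseteq> A m" for n m
    using lift_Suc_mono_le[of A n m] R by blast
  define U where "U = (\<Union>n. A n)"
  have finU: "finite U" using AP assms(2) unfolding U_def by (meson UN_least finite_subset)
  define idx where "idx x = (SOME n. x \<in> A n)" for x
  have idx: "x \<in> U \<Longrightarrow> x \<in> A (idx x)" for x unfolding U_def idx_def by (auto intro: someI)
  define N where "N = Max (idx ` U)"
  have AN: "A N = U"
  proof
    show "A N \<subseteq> U" unfolding U_def by blast
    show "U \<subseteq> A N"
    proof
      fix x assume "x \<in> U"
      hence "idx x \<le> N" using finU unfolding N_def by simp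
      thus "x \<in> A N" using Amono idx \<open>x \<in> U\<close> by blast
    qed
  qed
  have "below_flat (Post F (A N)) (A N)"
    unfolding below_flat_def
  proof safe
    fix x b assume xb: "x \<le> b" and "b \<in> Post F (A N)"
    then obtain f a where f: "f \<in> F" "a \<in> A N" "f a = Some b" by (auto simp: Post_def)
    have fF: "f \<in> Fstar F" using f(1) by (rule Fstar.base)
    then obtain m where m: "m \<ge> N" "c m = (f, a)"
      using fair f unfolding clover_fair_def pdom_def by blast
    obtain z where z: "accel f a = Some z" "b \<le> z"
      using accel_ok[OF assms(1) assms(2) fF, of a b] f AP by blast
    have "z \<in> A (Suc m)" using R[of m] m z by simp
    hence "z \<in> A N" using AN unfolding U_def by blast
    thus "\<exists>c\<in>A N. x \<le> c" using xb z order_trans by blast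
  qed
  thus False using R by blast
qed

end
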